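(* Let $0\le t\le u\le T$, $X\in L^2(\mathcal{F}_u)$, $\beta\ge0$. For $q\in[0,1]$ and $\alpha\ge-1$ set $\rho^{q,\alpha}_{tu}(X):=\ln_qE[\exp_q((X+\beta)^-+\alpha)\mid\mathcal{F}_t]$ (with values in $(-\infty,+\infty]$). Then for fixed $\alpha\ge-1$ the map $q\mapsto\rho^{q,\alpha}_{tu}(X)$ is non-decreasing on $[0,1]$, and for fixed $q$ the map $\alpha\mapsto\rho^{q,\alpha}_{tu}(X)$ is non-decreasing. In particular, for $q\in(0,1)$ and $-1\le\alpha_0\le\alpha_q\le\alpha_1$, $$E[(X+\beta)^-+\alpha_0\mid\mathcal{F}_t]=\rho^{0,\alpha_0}_{tu}(X)\le\rho^{q,\alpha_q}_{tu}(X)\le\rho^{1,\alpha_1}_{tu}(X)=\ln E[\exp((X+\beta)^-+\alpha_1)\mid\mathcal{F}_t].$$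
   Context: $(\mathcal{F}_t)_{t\in[0,T]}$ is the $P$-augmented filtration of a $d$-dimensional Brownian motion. For $q\in[0,1)$: $\exp_q(x):=[1+(1-q)x]^{1/(1-q)}$ for $x\ge\frac1{q-1}$ and $\ln_q(x):=\frac{x^{1-q}-1}{1-q}$ for $x\ge 0$, with $\ln_q(+\infty):=+\infty$; for $q=1$, $\exp_1=\exp$ and $\ln_1=\ln$. For $q=0$: $\exp_0(x)=1+x$, $\ln_0(x)=x-1$. Since $(X+\beta)^-+\alpha\ge-1\ge\frac1{q-1}$, the expressions are well-defined, with conditional expectations of non-negative variables taken in $[0,\infty]$. $x^-:=\max(-x,0)$. *)

theory Defs
  imports "HOL-Probability.Probability"
begin

text \<open>q-exponential, defined for x \<ge> 1/(q-1) (only used with q in [0,1] and x \<ge> -1).\<close>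
definition expq :: "real \<Rightarrow> real \<Rightarrow> real" where
  "expq q x = (if q = 1 then exp x else (1 + (1 - q) * x) powr (1 / (1 - q)))"

definition ln_ennreal :: "ennreal \<Rightarrow> ereal" where
  "ln_ennreal y = (if y = \<infinity> then \<infinity> else if y = 0 then -\<infinity> else ereal (ln (enn2real y)))"

definition lnq :: "real \<Rightarrow> ennreal \<Rightarrow> ereal" where
  "lnq q y = (if q = 1 then ln_ennreal y
              else if y = \<infinity> then \<infinity>
              else ereal ((enn2real y powr (1 - q) - 1) / (1 - q)))"

text \<open>W i s (i < d, 0 \<le> s \<le> T) are the components of a standard d-dimensional Brownian motion
  on [0,T] w.r.t. the probability space M.\<close>
definition brownian_motion :: "'a measure \<Rightarrow> nat \<Rightarrow> real \<Rightarrow> (nat \<Rightarrow> real \<Rightarrow> 'a \<Rightarrow> real) \<Rightarrow> bool" where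
  "brownian_motion M d T W \<longleftrightarrow>
     prob_space M \<and>
     (\<forall>i<d. \<forall>s\<in>{0..T}. W i s \<in> borel_measurable M) \<and>
     (AE \<omega> in M. \<forall>i<d. W i 0 \<omega> = 0 \<and> continuous_on {0..T} (\<lambda>s. W i s \<omega>)) \<and>
     (\<forall>(n::nat) (ts::nat \<Rightarrow> real). ts 0 = 0 \<longrightarrow> (\<forall>k<n. ts k < ts (Suc k)) \<longrightarrow> ts n \<le> T \<longrightarrow>
        prob_space.indep_vars M (\<lambda>_. borel)
          (\<lambda>(i, k) \<omega>. W i (ts (Suc k)) \<omega> - W i (ts k) \<omega>) ({..<d} \<times> {..<n}) \<and>
        (\<forall>i<d. \<forall>k<n. distributed M lborel (\<lambda>\<omega>. W i (ts (Suc k)) \<omega> - W i (ts k) \<omega>)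
           (\<lambda>x. ennreal (normal_density 0 (sqrt (ts (Suc k) - ts k)) x))))"

definition aug_filtration :: "'a measure \<Rightarrow> nat \<Rightarrow> (nat \<Rightarrow> real \<Rightarrow> 'a \<Rightarrow> real) \<Rightarrow> real \<Rightarrow> 'a measure" where
  "aug_filtration M d W t = sigma (space M)
     ({W i s -` B \<inter> space M | i s B. i < d \<and> 0 \<le> s \<and> s \<le> t \<and> B \<in> sets borel} \<union> null_sets M)"

definition rho :: "'a measure \<Rightarrow> 'a measure \<Rightarrow> real \<Rightarrow> real \<Rightarrow> real \<Rightarrow> ('a \<Rightarrow> real) \<Rightarrow> 'a \<Rightarrow> ereal" where
  "rho M Ft \<beta> q \<alpha> X \<omega> =
     lnq q (nn_cond_exp M Ft (\<lambda>x. ennreal (expq q (max (- (X x + \<beta>)) 0 + \<alpha>))) \<omega>)"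

end

theory Submission
  imports Defs
begin


definition gq :: "real \<Rightarrow> real \<Rightarrow> real" where
  "gq a y = (if a = 0 then exp y else if a = 1 then 1 + y else (1 + a*y) powr (1/a))"
definition Lq :: "real \<Rightarrow> real \<Rightarrow> real" where
  "Lq a y = (if a = 0 then y else ((1-a)/a) * ln (1 + a*y))"

lemma gq_deriv:
  assumes "0 \<le> a" "a \<le> 1" "-1 \<le> y"
  shows "(gq a has_real_derivative exp (Lq a y)) (at y)"
proof -
  consider "a = 0" | "a = 1" | "0 < a" "a < 1" using assms by linarith
  then show ?thesis
  proof cases
    case 1
    have "gq a = exp" using 1 by (auto simp: gq_def)
    then show ?thesis using 1 by (simp add: Lq_def DERIV_exp)
  next
    case 2
    have "gq a = (\<lambda>y. 1 + y)" using 2 by (auto simp: gq_def)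
    then show ?thesis using 2 by (auto simp: Lq_def intro!: derivative_eq_intros)
  next
    case 3
    have "a * (-1) \<le> a*y" using 3 assms by (intro mult_left_mono) auto
    then have pos: "0 < 1 + a*y" using 3 by simp
    have "gq a = (\<lambda>y. (1 + a*y) powr (1/a))" using 3 by (auto simp: gq_def)
    moreover have "((\<lambda>y. (1 + a*y) powr (1/a)) has_real_derivative
        (1/a) * (1 + a*y) powr (1/a - 1) * a) (at y)"
      using pos by (auto intro!: derivative_eq_intros)
    moreover have "(1/a) * (1 + a*y) powr (1/a - 1) * a = exp (Lq a y)"
    proof -
      have e: "1/a - 1 = (1-a)/a" using 3 by (simp add: field_simps)
      have "(1/a) * (1 + a*y) powr (1/a - 1) * a = (1 + a*y) powr (1/a - 1)" using 3 by simp
      also have "\<dots> = exp (((1-a)/a) * ln (1 + a*y))" using pos by (simp add: powr_def e)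
      finally show ?thesis using 3 by (simp add: Lq_def)
    qed
    ultimately show ?thesis by simp
  qed
qed

lemma Lq_deriv:
  assumes "0 \<le> a" "a \<le> 1" "-1 \<le> y"
  shows "(Lq a has_real_derivative (1-a)/(1+a*y)) (at y)"
proof -
  consider "a = 0" | "a = 1" | "0 < a" "a < 1" using assms by linarith
  then show ?thesis
  proof cases
    case 1
    have "Lq a = (\<lambda>y. y)" using 1 by (auto simp: Lq_def)
    then show ?thesis using 1 by (auto intro!: derivative_eq_intros)
  next
    case 2
    have "Lq a = (\<lambda>y. 0)" using 2 by (auto simp: Lq_def)
    then show ?thesis using 2 by (auto intro!: derivative_eq_intros)
  next
    case 3
    have "a * (-1) \<le> a*y" using 3 assms by (intro mult_left_mono) auto
    then have pos: "0 < 1 + a*y" using 3 by simp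
    have "Lq a = (\<lambda>y. ((1-a)/a) * ln (1 + a*y))" using 3 by (auto simp: Lq_def)
    moreover have "((\<lambda>y. ((1-a)/a) * ln (1 + a*y)) has_real_derivative
        ((1-a)/a) * (a / (1 + a*y))) (at y)"
      using pos by (auto intro!: derivative_eq_intros)
    moreover have "((1-a)/a) * (a / (1 + a*y)) = (1-a)/(1+a*y)"
      using 3 pos by simp
    ultimately show ?thesis by metis
  qed
qed

lemma key_frac:
  fixes a b y :: real
  assumes "0 \<le> b" "b < a" "a \<le> 1" "-1 \<le> y"
  shows "(1-a)/(1+a*y) \<le> (1-b)/(1+b*y)"
proof -
  have "b * (-1) \<le> b*y" by (rule mult_left_mono) (use assms in auto)
  then have pb: "0 < 1 + b*y" using assms by simp
  have "a * (-1) \<le> a*y" by (rule mult_left_mono) (use assms in auto)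
  then have pa: "0 \<le> 1 + a*y" using assms by simp
  show ?thesis
  proof (cases "1 + a*y = 0")
    case True then show ?thesis using pb assms by simp
  next
    case False
    with pa have pa': "0 < 1 + a*y" by simp
    have "(1-a)*(1+b*y) \<le> (1-b)*(1+a*y)"
    proof -
      have "(1-b)*(1+a*y) - (1-a)*(1+b*y) = (a-b)*(1+y)" by (simp add: algebra_simps)
      moreover have "0 \<le> (a-b)*(1+y)" using assms by simp
      ultimately show ?thesis by linarith
    qed
    then show ?thesis using pa' pb by (simp add: pos_divide_le_eq pos_le_divide_eq)
  qed
qed

lemma H_mono:
  assumes "0 \<le> b" "b < a" "a \<le> 1" "-1 \<le> y" "y \<le> y'"
  shows "Lq b y - Lq a y \<le> Lq b y' - Lq a y'"
proof (rule DERIV_nonneg_imp_nondecreasing[OF assms(5)])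
  fix x assume x: "y \<le> x" "x \<le> y'"
  show "\<exists>z. ((\<lambda>y. Lq b y - Lq a y) has_real_derivative z) (at x) \<and> 0 \<le> z"
  proof (intro exI conjI)
    show "((\<lambda>y. Lq b y - Lq a y) has_real_derivative (1-b)/(1+b*x) - (1-a)/(1+a*x)) (at x)"
      using Lq_deriv[of b x] Lq_deriv[of a x] assms x by (intro DERIV_diff) auto
    show "0 \<le> (1-b)/(1+b*x) - (1-a)/(1+a*x)" using key_frac[of b a x] assms x by simp
  qed
qed

lemma tangent:
  assumes "0 \<le> b" "b < a" "a \<le> 1" "-1 \<le> y" "-1 \<le> y0"
  shows "gq a y - exp (Lq a y0 - Lq b y0) * gq b y \<le> gq a y0 - exp (Lq a y0 - Lq b y0) * gq b y0"
proof -
  define c where "c = exp (Lq a y0 - Lq b y0)"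
  have D: "((\<lambda>y. gq a y - c * gq b y) has_real_derivative
      exp (Lq b x) * (exp (Lq a x - Lq b x) - c)) (at x)" if "-1 \<le> x" for x
  proof -
    have "((\<lambda>y. gq a y - c * gq b y) has_real_derivative exp (Lq a x) - c * exp (Lq b x)) (at x)"
      using gq_deriv[of a x] gq_deriv[of b x] assms that
      by (intro DERIV_diff DERIV_cmult) auto
    moreover have "exp (Lq a x) - c * exp (Lq b x) = exp (Lq b x) * (exp (Lq a x - Lq b x) - c)"
      by (simp add: algebra_simps exp_diff)
    ultimately show ?thesis by simp
  qed
  show ?thesis
  proof (cases "y \<le> y0")
    case True
    have "(\<lambda>y. gq a y - c * gq b y) y \<le> (\<lambda>y. gq a y - c * gq b y) y0"
    proof (rule DERIV_nonneg_imp_nondecreasing[OF True])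
      fix x assume x: "y \<le> x" "x \<le> y0"
      have "Lq b x - Lq a x \<le> Lq b y0 - Lq a y0" using H_mono[of b a x y0] assms x by simp
      then have "c \<le> exp (Lq a x - Lq b x)" unfolding c_def by simp
      then show "\<exists>z. ((\<lambda>y. gq a y - c * gq b y) has_real_derivative z) (at x) \<and> 0 \<le> z"
        using D[of x] x assms by (intro exI[of _ "exp (Lq b x) * (exp (Lq a x - Lq b x) - c)"] conjI) auto
    qed
    then show ?thesis unfolding c_def by simp
  next
    case False
    then have le: "y0 \<le> y" by simp
    have "(\<lambda>y. gq a y - c * gq b y) y \<le> (\<lambda>y. gq a y - c * gq b y) y0"
    proof (rule DERIV_nonpos_imp_nonincreasing[OF le])
      fix x assume x: "y0 \<le> x" "x \<le> y"
      have "Lq b y0 - Lq a y0 \<le> Lq b x - Lq a x" using H_mono[of b a y0 x] assms x by simp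
      then have "exp (Lq a x - Lq b x) \<le> c" unfolding c_def by simp
      then show "\<exists>z. ((\<lambda>y. gq a y - c * gq b y) has_real_derivative z) (at x) \<and> z \<le> 0"
        using D[of x] x assms by (intro exI[of _ "exp (Lq b x) * (exp (Lq a x - Lq b x) - c)"] conjI) (auto simp: mult_nonneg_nonpos)
    qed
    then show ?thesis unfolding c_def by simp
  qed
qed



lemma expq_gq:
  assumes "0 \<le> q" "q \<le> 1" "-1 \<le> y"
  shows "expq q y = gq (1-q) y"
proof -
  consider "q = 1" | "q = 0" | "0 < q" "q < 1" using assms by linarith
  then show ?thesis
  proof cases
    case 1 then show ?thesis by (simp add: expq_def gq_def)
  next
    case 2 then show ?thesis using assms by (simp add: expq_def gq_def powr_one)
  next
    case 3 then show ?thesis by (simp add: expq_def gq_def)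
  qed
qed

lemma gq_nonneg: "-1 \<le> y \<Longrightarrow> 0 \<le> gq a y"
  by (simp add: gq_def)

lemma gq_mono:
  assumes "0 \<le> a" "a \<le> 1" "-1 \<le> y" "y \<le> y'"
  shows "gq a y \<le> gq a y'"
proof (rule DERIV_nonneg_imp_nondecreasing[OF assms(4)])
  fix x assume "y \<le> x" "x \<le> y'"
  then show "\<exists>z. (gq a has_real_derivative z) (at x) \<and> 0 \<le> z"
    using gq_deriv[of a x] assms by (intro exI[of _ "exp (Lq a x)"]) auto
qed

lemma onepos:
  fixes a y :: real
  assumes "0 \<le> a" "a \<le> 1" "-1 \<le> y"
  shows "0 \<le> 1 + a*y"
proof -
  have "a * (-1) \<le> a*y" by (rule mult_left_mono) (use assms in auto)
  then show ?thesis using assms by simp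
qed

lemma onepos':
  fixes a y :: real
  assumes "0 \<le> a" "a < 1" "-1 \<le> y"
  shows "0 < 1 + a*y"
proof -
  have "a * (-1) \<le> a*y" by (rule mult_left_mono) (use assms in auto)
  then show ?thesis using assms by simp
qed

lemma lnq_gq:
  assumes "0 \<le> a" "a \<le> 1" "-1 \<le> y"
  shows "lnq (1-a) (ennreal (gq a y)) = ereal y"
proof -
  consider "a = 0" | "a = 1" | "0 < a" "a < 1" using assms by linarith
  then show ?thesis
  proof cases
    case 1 then show ?thesis by (simp add: lnq_def gq_def ln_ennreal_def)
  next
    case 2
    have "0 \<le> 1 + y" using assms by simp
    then show ?thesis using 2 by (simp add: lnq_def gq_def powr_one)
  next
    case 3
    have pos: "0 < 1 + a*y" using onepos'[of a y] 3 assms by simp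
    have "((1 + a*y) powr (1/a)) powr a = 1 + a*y"
      using 3 pos by (simp add: powr_powr)
    then show ?thesis using 3 pos by (simp add: lnq_def gq_def)
  qed
qed

lemma gq_minus1_pos:
  assumes "0 \<le> b" "b < 1"
  shows "0 < gq b (-1)"
  using assms by (auto simp: gq_def)

lemma lnq_inv:
  assumes "0 \<le> b" "b < 1" "gq b (-1) \<le> z"
  shows "lnq (1-b) (ennreal z) = ereal (real_of_ereal (lnq (1-b) (ennreal z)))
    \<and> -1 \<le> real_of_ereal (lnq (1-b) (ennreal z))
    \<and> gq b (real_of_ereal (lnq (1-b) (ennreal z))) = z"
proof -
  have zpos: "0 < z" using gq_minus1_pos[OF assms(1,2)] assms(3) by linarith
  show ?thesis
  proof (cases "b = 0")
    case True
    have "exp (-1) \<le> z" using assms(3) True by (simp add: gq_def)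
    then have "-1 \<le> ln z" using zpos by (simp add: ln_ge_iff)
    then show ?thesis using True zpos by (simp add: lnq_def gq_def ln_ennreal_def)
  next
    case False
    then have b: "0 < b" using assms by simp
    have l: "lnq (1-b) (ennreal z) = ereal ((z powr b - 1) / b)"
      using b zpos by (simp add: lnq_def)
    have "(1 - b) powr (1/b) \<le> z" using assms(2,3) b by (simp add: gq_def)
    then have "((1 - b) powr (1/b)) powr b \<le> z powr b"
      using b assms by (intro powr_mono2) auto
    then have zb: "1 - b \<le> z powr b" using b assms by (simp add: powr_powr)
    have "-1 \<le> (z powr b - 1) / b" using zb b by (simp add: field_simps)
    moreover have "gq b ((z powr b - 1) / b) = z"
      using b assms zpos by (simp add: gq_def powr_powr)
    ultimately show ?thesis using l by simp
  qed
qed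

lemma lnq_mono:
  assumes "0 \<le> q" "q \<le> 1" "y \<le> y'"
  shows "lnq q y \<le> lnq q y'"
proof (cases "q = 1")
  case True
  show ?thesis
  proof (cases "y' = \<infinity>")
    case True then show ?thesis using \<open>q = 1\<close> by (simp add: lnq_def ln_ennreal_def)
  next
    case False
    show ?thesis
    proof (cases "y = 0")
      case True then show ?thesis using \<open>q = 1\<close> by (simp add: lnq_def ln_ennreal_def)
    next
      case False
      then have "y \<noteq> \<infinity>" using \<open>y' \<noteq> \<infinity>\<close> assms(3) top.extremum_unique by auto
      then have "0 < enn2real y" using False by (simp add: enn2real_positive_iff less_top zero_less_iff_neq_zero)
      moreover have "enn2real y \<le> enn2real y'" using assms(3) \<open>y' \<noteq> \<infinity>\<close> by (simp add: enn2real_mono less_top)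
      moreover have "y' \<noteq> 0" using False assms(3) by auto
      ultimately show ?thesis using \<open>q = 1\<close> \<open>y' \<noteq> \<infinity>\<close> \<open>y \<noteq> \<infinity>\<close> False
        by (simp add: lnq_def ln_ennreal_def)
    qed
  qed
next
  case False
  show ?thesis
  proof (cases "y' = \<infinity>")
    case True then show ?thesis using False by (simp add: lnq_def)
  next
    case ninf: False
    then have "y \<noteq> \<infinity>" using assms(3) top.extremum_unique by auto
    have "enn2real y \<le> enn2real y'" using assms(3) ninf by (simp add: enn2real_mono less_top)
    then have "enn2real y powr (1-q) \<le> enn2real y' powr (1-q)"
      using assms by (intro powr_mono2) auto
    then have "(enn2real y powr (1-q) - 1)/(1-q) \<le> (enn2real y' powr (1-q) - 1)/(1-q)"
      using assms False by (intro divide_right_mono) auto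
    then show ?thesis using False ninf \<open>y \<noteq> \<infinity>\<close> by (simp add: lnq_def)
  qed
qed



lemma gq_measurable[measurable]: "gq a \<in> borel_measurable borel"
  unfolding gq_def by measurable

lemma Lq_measurable[measurable]: "Lq a \<in> borel_measurable borel"
  unfolding Lq_def by measurable

lemma lnq_measurable[measurable]: "lnq q \<in> borel_measurable borel"
  unfolding lnq_def ln_ennreal_def by measurable

context sigma_finite_subalgebra
begin

lemma q_mono_main:
  assumes ab: "0 \<le> b" "b < a" "a \<le> 1"
    and Ym[measurable]: "Y \<in> borel_measurable M" and Yge: "\<And>x. -1 \<le> Y x"
  shows "AE \<omega> in M. lnq (1-a) (nn_cond_exp M F (\<lambda>x. ennreal (gq a (Y x))) \<omega>)
                \<le> lnq (1-b) (nn_cond_exp M F (\<lambda>x. ennreal (gq b (Y x))) \<omega>)"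
proof -
  define U where "U = (\<lambda>x. ennreal (gq a (Y x)))"
  define Z where "Z = (\<lambda>x. ennreal (gq b (Y x)))"
  define z0 where "z0 = nn_cond_exp M F Z"
  define y0 where "y0 = (\<lambda>\<omega>. max (-1) (real_of_ereal (lnq (1-b) (z0 \<omega>))))"
  define c where "c = (\<lambda>\<omega>. exp (Lq a (y0 \<omega>) - Lq b (y0 \<omega>)))"
  define e where "e = (\<lambda>\<omega>. gq a (y0 \<omega>))"
  define w where "w = (\<lambda>\<omega>. gq b (y0 \<omega>))"
  have [measurable]: "U \<in> borel_measurable M" "Z \<in> borel_measurable M"
    unfolding U_def Z_def by measurable
  have z0m[measurable]: "z0 \<in> borel_measurable F" unfolding z0_def by measurable
  have y0m[measurable]: "y0 \<in> borel_measurable F" unfolding y0_def by measurable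
  have [measurable]: "c \<in> borel_measurable F" "e \<in> borel_measurable F" "w \<in> borel_measurable F"
    unfolding c_def e_def w_def by measurable
  have [measurable]: "c \<in> borel_measurable M" "e \<in> borel_measurable M" "w \<in> borel_measurable M"
    by (rule measurable_from_subalg[OF subalg], measurable)+
  have y0ge: "-1 \<le> y0 \<omega>" for \<omega> unfolding y0_def by simp
  have b1: "b < 1" "0 \<le> a" using ab by auto
  have pw: "U \<omega> + ennreal (c \<omega> * w \<omega>) \<le> ennreal (e \<omega>) + ennreal (c \<omega>) * Z \<omega>" for \<omega>
  proof -
    have t: "gq a (Y \<omega>) - c \<omega> * gq b (Y \<omega>) \<le> e \<omega> - c \<omega> * w \<omega>"
      using tangent[OF ab Yge[of \<omega>] y0ge[of \<omega>]] unfolding c_def e_def w_def by simp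
    have "gq a (Y \<omega>) + c \<omega> * w \<omega> \<le> e \<omega> + c \<omega> * gq b (Y \<omega>)" using t by simp
    then have "ennreal (gq a (Y \<omega>) + c \<omega> * w \<omega>) \<le> ennreal (e \<omega> + c \<omega> * gq b (Y \<omega>))"
      by (rule ennreal_leI)
    moreover have "0 \<le> gq a (Y \<omega>)" "0 \<le> c \<omega> * w \<omega>" "0 \<le> e \<omega>" "0 \<le> c \<omega> * gq b (Y \<omega>)" "0 \<le> c \<omega>"
      "0 \<le> gq b (Y \<omega>)"
      using gq_nonneg Yge y0ge unfolding c_def e_def w_def by auto
    ultimately have le: "ennreal (gq a (Y \<omega>) + c \<omega> * w \<omega>) \<le> ennreal (e \<omega> + c \<omega> * gq b (Y \<omega>))"
      and nn: "0 \<le> gq a (Y \<omega>)" "0 \<le> c \<omega> * w \<omega>" "0 \<le> e \<omega>" "0 \<le> c \<omega> * gq b (Y \<omega>)" "0 \<le> c \<omega>"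
      "0 \<le> gq b (Y \<omega>)" by auto
    have e1: "ennreal (gq a (Y \<omega>) + c \<omega> * w \<omega>) = U \<omega> + ennreal (c \<omega> * w \<omega>)"
      unfolding U_def by (rule ennreal_plus) (use nn in auto)
    have e2: "ennreal (e \<omega> + c \<omega> * gq b (Y \<omega>)) = ennreal (e \<omega>) + ennreal (c \<omega>) * Z \<omega>"
    proof -
      have "ennreal (e \<omega> + c \<omega> * gq b (Y \<omega>)) = ennreal (e \<omega>) + ennreal (c \<omega> * gq b (Y \<omega>))"
        by (rule ennreal_plus) (use nn in auto)
      also have "ennreal (c \<omega> * gq b (Y \<omega>)) = ennreal (c \<omega>) * Z \<omega>"
        unfolding Z_def by (rule ennreal_mult) (use nn in auto)
      finally show ?thesis .
    qed
    show ?thesis using le unfolding e1 e2 .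
  qed
  have A1: "AE \<omega> in M. nn_cond_exp M F (\<lambda>x. U x + ennreal (c x * w x)) \<omega>
      \<le> nn_cond_exp M F (\<lambda>x. ennreal (e x) + ennreal (c x) * Z x) \<omega>"
  proof (rule nn_cond_exp_mono)
    show "AE x in M. U x + ennreal (c x * w x) \<le> ennreal (e x) + ennreal (c x) * Z x" using pw by simp
  qed measurable
  have A2: "AE \<omega> in M. nn_cond_exp M F U \<omega> + nn_cond_exp M F (\<lambda>x. ennreal (c x * w x)) \<omega>
      = nn_cond_exp M F (\<lambda>x. U x + ennreal (c x * w x)) \<omega>"
    by (rule nn_cond_exp_sum) auto
  have A3: "AE \<omega> in M. ennreal (c \<omega> * w \<omega>) = nn_cond_exp M F (\<lambda>x. ennreal (c x * w x)) \<omega>"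
    by (rule nn_cond_exp_F_meas) auto
  have A4: "AE \<omega> in M. nn_cond_exp M F (\<lambda>x. ennreal (e x)) \<omega> + nn_cond_exp M F (\<lambda>x. ennreal (c x) * Z x) \<omega>
      = nn_cond_exp M F (\<lambda>x. ennreal (e x) + ennreal (c x) * Z x) \<omega>"
    by (rule nn_cond_exp_sum) (auto intro: measurable_from_subalg[OF subalg])
  have A5: "AE \<omega> in M. ennreal (e \<omega>) = nn_cond_exp M F (\<lambda>x. ennreal (e x)) \<omega>"
    by (rule nn_cond_exp_F_meas) auto
  have A6: "AE \<omega> in M. ennreal (c \<omega>) * z0 \<omega> = nn_cond_exp M F (\<lambda>x. ennreal (c x) * Z x) \<omega>"
    unfolding z0_def by (rule nn_cond_exp_prod) auto
  have A7: "AE \<omega> in M. nn_cond_exp M F (\<lambda>x. ennreal (gq b (-1))) \<omega> \<le> z0 \<omega>"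
    unfolding z0_def Z_def
    by (rule nn_cond_exp_mono) (use gq_mono[of b "-1"] b1 ab Yge in \<open>auto intro!: ennreal_leI\<close>)
  have A8: "AE \<omega> in M. ennreal (gq b (-1)) = nn_cond_exp M F (\<lambda>x. ennreal (gq b (-1))) \<omega>"
    by (rule nn_cond_exp_F_meas) auto
  have "AE \<omega> in M. lnq (1-a) (nn_cond_exp M F U \<omega>) \<le> lnq (1-b) (z0 \<omega>)"
    using A1 A2 A3 A4 A5 A6 A7 A8
  proof eventually_elim
    case (elim \<omega>)
    have main: "nn_cond_exp M F U \<omega> + ennreal (c \<omega> * w \<omega>) \<le> ennreal (e \<omega>) + ennreal (c \<omega>) * z0 \<omega>"
      using elim by simp
    have zge: "ennreal (gq b (-1)) \<le> z0 \<omega>" using elim by simp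
    show ?case
    proof (cases "z0 \<omega> = \<infinity>")
      case True
      then show ?thesis by (simp add: lnq_def ln_ennreal_def)
    next
      case False
      obtain zr where zr: "z0 \<omega> = ennreal zr" "0 \<le> zr"
        using False by (cases "z0 \<omega>" rule: ennreal_cases) auto
      have "gq b (-1) \<le> zr" using zge zr gq_minus1_pos[of b] ab b1
        by (simp add: ennreal_le_iff)
      note inv = lnq_inv[OF ab(1) b1(1) this]
      have y0eq: "y0 \<omega> = real_of_ereal (lnq (1-b) (ennreal zr))"
        unfolding y0_def using inv zr by simp
      have wz: "w \<omega> = zr" unfolding w_def y0eq using inv by simp
      have "c \<omega> \<ge> 0" unfolding c_def by simp
      then have "ennreal (c \<omega> * w \<omega>) = ennreal (c \<omega>) * z0 \<omega>"
        using wz zr by (simp add: ennreal_mult)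
      then have "nn_cond_exp M F U \<omega> + ennreal (c \<omega>) * z0 \<omega> \<le> ennreal (e \<omega>) + ennreal (c \<omega>) * z0 \<omega>"
        using main by simp
      moreover have "ennreal (c \<omega>) * z0 \<omega> \<noteq> \<infinity>"
      proof -
        have "ennreal (c \<omega>) * z0 \<omega> = ennreal (c \<omega> * zr)" using zr \<open>c \<omega> \<ge> 0\<close> by (simp add: ennreal_mult)
        then show ?thesis by simp
      qed
      ultimately have le: "nn_cond_exp M F U \<omega> \<le> ennreal (e \<omega>)"
        by (metis add.commute ennreal_add_left_cancel_le)
      have "lnq (1-a) (nn_cond_exp M F U \<omega>) \<le> lnq (1-a) (ennreal (e \<omega>))"
        using lnq_mono[OF _ _ le] ab by simp
      also have "\<dots> = ereal (y0 \<omega>)" unfolding e_def using lnq_gq[OF b1(2) ab(3) y0ge] .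
      also have "\<dots> = lnq (1-b) (z0 \<omega>)" using y0eq inv zr by simp
      finally show ?thesis .
    qed
  qed
  then show ?thesis unfolding U_def z0_def Z_def .
qed

end



lemma expq_measurable[measurable]: "expq q \<in> borel_measurable borel"
  unfolding expq_def by measurable

context sigma_finite_subalgebra
begin

lemma alpha_mono:
  assumes q: "0 \<le> q" "q \<le> 1"
    and [measurable]: "Y1 \<in> borel_measurable M" "Y2 \<in> borel_measurable M"
    and ge: "\<And>x. -1 \<le> Y1 x" and le: "\<And>x. Y1 x \<le> Y2 x"
  shows "AE \<omega> in M. lnq q (nn_cond_exp M F (\<lambda>x. ennreal (expq q (Y1 x))) \<omega>)
     \<le> lnq q (nn_cond_exp M F (\<lambda>x. ennreal (expq q (Y2 x))) \<omega>)"
proof -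
  have "AE \<omega> in M. nn_cond_exp M F (\<lambda>x. ennreal (expq q (Y1 x))) \<omega>
     \<le> nn_cond_exp M F (\<lambda>x. ennreal (expq q (Y2 x))) \<omega>"
  proof (rule nn_cond_exp_mono)
    have "expq q (Y1 x) \<le> expq q (Y2 x)" for x
    proof -
      have "-1 \<le> Y2 x" using ge[of x] le[of x] by linarith
      then show ?thesis using expq_gq[OF q ge[of x]] expq_gq[OF q, of "Y2 x"]
          gq_mono[of "1-q" "Y1 x" "Y2 x"] q ge[of x] le[of x] by simp
    qed
    then show "AE x in M. ennreal (expq q (Y1 x)) \<le> ennreal (expq q (Y2 x))"
      by (auto intro: ennreal_leI)
  qed measurable
  then show ?thesis by eventually_elim (rule lnq_mono[OF q])
qed

lemma q_mono:
  assumes q: "0 \<le> q1" "q1 \<le> q2" "q2 \<le> 1"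
    and [measurable]: "Y \<in> borel_measurable M" and ge: "\<And>x. -1 \<le> Y x"
  shows "AE \<omega> in M. lnq q1 (nn_cond_exp M F (\<lambda>x. ennreal (expq q1 (Y x))) \<omega>)
     \<le> lnq q2 (nn_cond_exp M F (\<lambda>x. ennreal (expq q2 (Y x))) \<omega>)"
proof (cases "q1 = q2")
  case True then show ?thesis by simp
next
  case False
  have e1: "(\<lambda>x. ennreal (expq q1 (Y x))) = (\<lambda>x. ennreal (gq (1-q1) (Y x)))"
    using expq_gq[of q1] q ge by auto
  have e2: "(\<lambda>x. ennreal (expq q2 (Y x))) = (\<lambda>x. ennreal (gq (1-q2) (Y x)))"
    using expq_gq[of q2] q ge by auto
  have "AE \<omega> in M. lnq (1-(1-q1)) (nn_cond_exp M F (\<lambda>x. ennreal (gq (1-q1) (Y x))) \<omega>)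
     \<le> lnq (1-(1-q2)) (nn_cond_exp M F (\<lambda>x. ennreal (gq (1-q2) (Y x))) \<omega>)"
    by (rule q_mono_main) (use q False ge in auto)
  then show ?thesis unfolding e1 e2 by simp
qed

lemma cond_exp_q0:
  assumes "prob_space M"
    and int: "integrable M Y" and [measurable]: "Y \<in> borel_measurable M" and ge: "\<And>x. -1 \<le> Y x"
  shows "AE \<omega> in M. ereal (real_cond_exp M F Y \<omega>)
     = lnq 0 (nn_cond_exp M F (\<lambda>x. ennreal (expq 0 (Y x))) \<omega>)"
proof -
  interpret P: prob_space M by fact
  define N where "N = nn_cond_exp M F (\<lambda>x. ennreal (1 + Y x))"
  have eq0: "(\<lambda>x. ennreal (expq 0 (Y x))) = (\<lambda>x. ennreal (1 + Y x))"
  proof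
    fix x have "0 \<le> 1 + Y x" using ge[of x] by simp
    then show "ennreal (expq 0 (Y x)) = ennreal (1 + Y x)" by (simp add: expq_def powr_one)
  qed
  have int1: "integrable M (\<lambda>x. 1 + Y x)" using int by simp
  have fin: "AE \<omega> in M. N \<omega> \<noteq> \<infinity>"
  proof (rule nn_integral_PInf_AE)
    show "N \<in> borel_measurable M" unfolding N_def by measurable
    have "(\<integral>\<^sup>+ x. (\<lambda>_. 1) x * N x \<partial>M) = (\<integral>\<^sup>+ x. (\<lambda>_. 1) x * ennreal (1 + Y x) \<partial>M)"
      unfolding N_def by (rule nn_cond_exp_intg) auto
    then have "(\<integral>\<^sup>+ x. N x \<partial>M) = (\<integral>\<^sup>+ x. ennreal (1 + Y x) \<partial>M)" by simp
    then show "(\<integral>\<^sup>+ x. N x \<partial>M) \<noteq> \<infinity>" using integrableD(2)[OF int1] by simp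
  qed
  have z: "AE \<omega> in M. (\<lambda>x. 0) \<omega> = nn_cond_exp M F (\<lambda>x. 0) \<omega>"
    by (rule nn_cond_exp_F_meas) auto
  have ng: "(\<lambda>x. ennreal (- (1 + Y x))) = (\<lambda>x. 0)"
  proof
    fix x show "ennreal (- (1 + Y x)) = 0" using ge[of x] by (simp add: ennreal_neg)
  qed
  have add: "AE \<omega> in M. real_cond_exp M F (\<lambda>x. 1 + Y x) \<omega> = real_cond_exp M F (\<lambda>x. 1) \<omega> + real_cond_exp M F Y \<omega>"
    by (rule real_cond_exp_add) (use int in auto)
  have one: "AE \<omega> in M. real_cond_exp M F (\<lambda>x. 1) \<omega> = 1"
    by (rule real_cond_exp_F_meas) auto
  show ?thesis using fin z add one
  proof eventually_elim
    case (elim \<omega>)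
    have "real_cond_exp M F (\<lambda>x. 1 + Y x) \<omega> = enn2real (N \<omega>)"
      unfolding real_cond_exp_def N_def ng using elim(2) by simp
    then have "real_cond_exp M F Y \<omega> = enn2real (N \<omega>) - 1" using elim by simp
    then show ?case unfolding eq0 using elim(1) by (simp add: lnq_def N_def powr_one)
  qed
qed

end


theorem mainTheorem7:
  fixes M :: "'a measure" and d :: nat and T t u \<beta> :: real
    and W :: "nat \<Rightarrow> real \<Rightarrow> 'a \<Rightarrow> real" and X :: "'a \<Rightarrow> real"
  defines "F \<equiv> aug_filtration M d W"
  assumes BM: "brownian_motion M d T W" and d: "d \<ge> 1"
    and tu: "0 \<le> t" "t \<le> u" "u \<le> T"
    and X_meas: "X \<in> borel_measurable (F u)"
    and X_L2: "integrable M (\<lambda>\<omega>. (X \<omega>)\<^sup>2)"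
    and \<beta>: "\<beta> \<ge> 0"
  shows
    "(\<forall>\<alpha> q1 q2. \<alpha> \<ge> -1 \<and> 0 \<le> q1 \<and> q1 \<le> q2 \<and> q2 \<le> 1 \<longrightarrow>
        (AE \<omega> in M. rho M (F t) \<beta> q1 \<alpha> X \<omega> \<le> rho M (F t) \<beta> q2 \<alpha> X \<omega>))
   \<and> (\<forall>q \<alpha>1 \<alpha>2. 0 \<le> q \<and> q \<le> 1 \<and> -1 \<le> \<alpha>1 \<and> \<alpha>1 \<le> \<alpha>2 \<longrightarrow>
        (AE \<omega> in M. rho M (F t) \<beta> q \<alpha>1 X \<omega> \<le> rho M (F t) \<beta> q \<alpha>2 X \<omega>))
   \<and> (\<forall>q \<alpha>0 \<alpha>q \<alpha>1. 0 < q \<and> q < 1 \<and> -1 \<le> \<alpha>0 \<and> \<alpha>0 \<le> \<alpha>q \<and> \<alpha>q \<le> \<alpha>1 \<longrightarrow>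
        (AE \<omega> in M.
           ereal (real_cond_exp M (F t) (\<lambda>x. max (- (X x + \<beta>)) 0 + \<alpha>0) \<omega>) = rho M (F t) \<beta> 0 \<alpha>0 X \<omega>
         \<and> rho M (F t) \<beta> 0 \<alpha>0 X \<omega> \<le> rho M (F t) \<beta> q \<alpha>q X \<omega>
         \<and> rho M (F t) \<beta> q \<alpha>q X \<omega> \<le> rho M (F t) \<beta> 1 \<alpha>1 X \<omega>
         \<and> rho M (F t) \<beta> 1 \<alpha>1 X \<omega>
             = ln_ennreal (nn_cond_exp M (F t) (\<lambda>x. ennreal (exp (max (- (X x + \<beta>)) 0 + \<alpha>1))) \<omega>)))"
proof -
  have PS: "prob_space M" using BM unfolding brownian_motion_def by simp
  interpret P: prob_space M by (rule PS)
  have sub: "subalgebra M (F s)" if "s \<le> T" for s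
  proof -
    define G where "G = {W i s' -` B \<inter> space M | i s' B. i < d \<and> 0 \<le> s' \<and> s' \<le> s \<and> B \<in> sets borel} \<union> null_sets M"
    have Gs: "G \<subseteq> sets M"
    proof
      fix A assume "A \<in> G"
      then show "A \<in> sets M"
      proof (cases "A \<in> null_sets M")
        case False
        with \<open>A \<in> G\<close> obtain i s' B where A: "A = W i s' -` B \<inter> space M" "i < d" "0 \<le> s'" "s' \<le> s" "B \<in> sets borel"
          unfolding G_def by blast
        have "W i s' \<in> borel_measurable M" using BM A that unfolding brownian_motion_def by auto
        then show ?thesis using A by (simp add: measurable_sets)
      qed auto
    qed
    then have Gp: "G \<subseteq> Pow (space M)" using sets.sets_into_space by blast
    have "F s = sigma (space M) G" unfolding F_def aug_filtration_def G_def by simp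
    then show ?thesis unfolding subalgebra_def
      using Gp Gs by (simp add: sets.sigma_sets_subset)
  qed
  have subt: "subalgebra M (F t)" using sub tu by simp
  have "sigma_finite_subalgebra M (F t)"
    by (rule finite_measure_subalgebra_is_sigma_finite, unfold_locales) (rule subt)
  then interpret S: sigma_finite_subalgebra M "F t" .
  have Xm[measurable]: "X \<in> borel_measurable M"
    by (rule measurable_from_subalg[OF sub[of u] X_meas]) (use tu in simp)
  define Y where "Y = (\<lambda>\<alpha> x. max (- (X x + \<beta>)) 0 + \<alpha>)"
  have Ym[measurable]: "Y \<alpha> \<in> borel_measurable M" for \<alpha> unfolding Y_def by measurable
  have Yge: "-1 \<le> \<alpha> \<Longrightarrow> -1 \<le> Y \<alpha> x" for \<alpha> x unfolding Y_def by simp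
  have rhoY: "rho M (F t) \<beta> q \<alpha> X \<omega> = lnq q (nn_cond_exp M (F t) (\<lambda>x. ennreal (expq q (Y \<alpha> x))) \<omega>)"
    for q \<alpha> \<omega> unfolding rho_def Y_def ..
  have P1: "AE \<omega> in M. rho M (F t) \<beta> q1 \<alpha> X \<omega> \<le> rho M (F t) \<beta> q2 \<alpha> X \<omega>"
    if "\<alpha> \<ge> -1" "0 \<le> q1" "q1 \<le> q2" "q2 \<le> 1" for \<alpha> q1 q2
    unfolding rhoY by (rule S.q_mono) (use that Yge in auto)
  have P2: "AE \<omega> in M. rho M (F t) \<beta> q \<alpha>1 X \<omega> \<le> rho M (F t) \<beta> q \<alpha>2 X \<omega>"
    if "0 \<le> q" "q \<le> 1" "-1 \<le> \<alpha>1" "\<alpha>1 \<le> \<alpha>2" for q \<alpha>1 \<alpha>2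
    unfolding rhoY by (rule S.alpha_mono) (use that Yge in \<open>auto simp: Y_def\<close>)
  have P3: "AE \<omega> in M.
           ereal (real_cond_exp M (F t) (\<lambda>x. max (- (X x + \<beta>)) 0 + \<alpha>0) \<omega>) = rho M (F t) \<beta> 0 \<alpha>0 X \<omega>
         \<and> rho M (F t) \<beta> 0 \<alpha>0 X \<omega> \<le> rho M (F t) \<beta> q \<alpha>q X \<omega>
         \<and> rho M (F t) \<beta> q \<alpha>q X \<omega> \<le> rho M (F t) \<beta> 1 \<alpha>1 X \<omega>
         \<and> rho M (F t) \<beta> 1 \<alpha>1 X \<omega>
             = ln_ennreal (nn_cond_exp M (F t) (\<lambda>x. ennreal (exp (max (- (X x + \<beta>)) 0 + \<alpha>1))) \<omega>)"
    if h: "0 < q" "q < 1" "-1 \<le> \<alpha>0" "\<alpha>0 \<le> \<alpha>q" "\<alpha>q \<le> \<alpha>1" for q \<alpha>0 \<alpha>q \<alpha>1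
  proof -
    have intX: "integrable M X"
      by (rule P.square_integrable_imp_integrable[OF Xm X_L2])
    have intY: "integrable M (Y \<alpha>0)" unfolding Y_def using intX by auto
    have R0: "AE \<omega> in M. ereal (real_cond_exp M (F t) (Y \<alpha>0) \<omega>) = rho M (F t) \<beta> 0 \<alpha>0 X \<omega>"
      unfolding rhoY by (rule S.cond_exp_q0[OF PS intY Ym]) (use h Yge in auto)
    have a: "AE \<omega> in M. rho M (F t) \<beta> 0 \<alpha>0 X \<omega> \<le> rho M (F t) \<beta> q \<alpha>0 X \<omega>" using P1 h by simp
    have b: "AE \<omega> in M. rho M (F t) \<beta> q \<alpha>0 X \<omega> \<le> rho M (F t) \<beta> q \<alpha>q X \<omega>" using P2 h by simp
    have c: "AE \<omega> in M. rho M (F t) \<beta> q \<alpha>q X \<omega> \<le> rho M (F t) \<beta> 1 \<alpha>q X \<omega>" using P1 h by simp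
    have d: "AE \<omega> in M. rho M (F t) \<beta> 1 \<alpha>q X \<omega> \<le> rho M (F t) \<beta> 1 \<alpha>1 X \<omega>" using P2 h by simp
    have e: "rho M (F t) \<beta> 1 \<alpha>1 X \<omega>
             = ln_ennreal (nn_cond_exp M (F t) (\<lambda>x. ennreal (exp (max (- (X x + \<beta>)) 0 + \<alpha>1))) \<omega>)" for \<omega>
      unfolding rho_def expq_def lnq_def by simp
    show ?thesis using R0 a b c d
    proof eventually_elim
      case (elim \<omega>)
      then show ?case using e[of \<omega>] unfolding Y_def by (auto intro: order_trans)
    qed
  qed
  show ?thesis using P1 P2 P3 by blast
qed

end
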